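(* Let $n\ge1$, $s\in\{1,\dots,n\}$ and let $C\in\mathbb{R}^{n\times n}$ be symmetric positive definite. Let $x^*$ be an optimal solution of the problem defining $\hat z(\lambda_{\min}(C))$, and let $\lambda^*=(\lambda^*_1\ge\dots\ge\lambda^*_n)\in\mathbb{R}^n_+$ be the eigenvalues of $M_{\lambda_{\min}(C)}(x^* )$ in nonincreasing order (with $\lambda^*_{n+1}:=0$ if $s=n$). Then $$\hat z^D(\lambda_{\min}(C))-\hat z(\lambda_{\min}(C))\ge\Theta^{lb}:=\Big(\frac{1}{\lambda^*_{s+1}+\lambda_{\min}(C)}-\frac{1}{\lambda^*_s+\lambda_{\min}(C)}\Big)\sum_{i=s+1}^n\lambda^*_i\ge0.$$
   Context: $\lambda_{\min}(C)$ is the smallest eigenvalue of $C$. For $0\le t\le\lambda_{\min}(C)$ let $A(t)\in\mathbb{R}^{n\times n}$ be a Cholesky factor of $C-tI$ (so $C-tI=A(t)^\top A(t)$), with $i$-th column $a_i(t)$, and for $x\in[0,1]^n$ let $M_t(x)=\sum_i x_i a_i(t)a_i(t)^\top$. For a positive semidefinite $X$ with eigenvalues $\lambda_1(X)\ge\dots\ge\lambda_n(X)$, $\Phi_s(X;t)=\sum_{i=1}^s\log(\lambda_i(X)+t)$ (natural log); $\widehat{\Phi}_s(\cdot\,;t)$ is its concave envelope on the cone of $n\times n$ positive semidefinite matrices (pointwise infimum of all concave functions there that are $\ge\Phi_s(\cdot\,;t)$). $\hat z(t)=\max\{\widehat{\Phi}_s(M_t(x);t) : x\in[0,1]^n,\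 \sum_i x_i=s\}$, and for $t>0$, $\hat z^D(t)=\max\{\log\det(M_t(x)+tI) : x\in[0,1]^n,\ \sum_i x_i=s\}-(n-s)\log(t)$. *)

theory Defs
  imports "HOL-Analysis.Analysis"
begin

text \<open>Eigenvalues (with multiplicity) of an n x n matrix, n = CARD('n), listed in
nonincreasing order as lam 1 >= ... >= lam n, characterised via the characteristic
polynomial; entries outside 1..n are set to 0 (so lam (n+1) = 0).\<close>
definition is_sorted_eigs :: "real^'n^'n \<Rightarrow> (nat \<Rightarrow> real) \<Rightarrow> bool" where
  "is_sorted_eigs X lam \<longleftrightarrow>
     (\<forall>i j. 1 \<le> i \<and> i \<le> j \<and> j \<le> CARD('n) \<longrightarrow> lam j \<le> lam i) \<and>
     (\<forall>mu. det (mat mu - X) = (\<Prod>i=1..CARD('n). mu - lam i)) \<and>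
     (\<forall>i. i \<notin> {1..CARD('n)} \<longrightarrow> lam i = 0)"

definition eigs :: "real^'n^'n \<Rightarrow> nat \<Rightarrow> real" where
  "eigs X = (THE lam. is_sorted_eigs X lam)"

definition lambda_min :: "real^'n^'n \<Rightarrow> real" where
  "lambda_min X = eigs X CARD('n)"

definition is_cholesky_factor :: "real^('a::{finite,wellorder})^('a::{finite,wellorder}) \<Rightarrow> real^('a::{finite,wellorder})^('a::{finite,wellorder}) \<Rightarrow> bool" where
  "is_cholesky_factor A X \<longleftrightarrow> transpose A ** A = X \<and>
     (\<forall>i j. j < i \<longrightarrow> A $ i $ j = 0) \<and> (\<forall>i. 0 \<le> A $ i $ i)"

definition psd_cone :: "(real^'n^'n) set" where
  "psd_cone = {X. transpose X = X \<and> (\<forall>v. 0 \<le> v \<bullet> (X *v v))}"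

definition pos_def :: "real^'n^'n \<Rightarrow> bool" where
  "pos_def X \<longleftrightarrow> transpose X = X \<and> (\<forall>v. v \<noteq> 0 \<longrightarrow> 0 < v \<bullet> (X *v v))"

definition Phi :: "nat \<Rightarrow> real \<Rightarrow> real^'n^'n \<Rightarrow> real" where
  "Phi s t X = (\<Sum>i=1..s. ln (eigs X i + t))"

definition Phi_hat :: "nat \<Rightarrow> real \<Rightarrow> real^'n^'n \<Rightarrow> real" where
  "Phi_hat s t X = Inf {g X | g. concave_on psd_cone g \<and> (\<forall>Y\<in>psd_cone. Phi s t Y \<le> g Y)}"

text \<open>M_t(x) = sum_i x_i a_i a_i^T where a_i is the i-th column of the factor A.\<close>
definition Mmat :: "real^'n^'n \<Rightarrow> real^'n \<Rightarrow> real^'n^'n" where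
  "Mmat A x = (\<Sum>i\<in>UNIV. (x $ i) *\<^sub>R (\<chi> j k. A $ j $ i * A $ k $ i))"

definition feasible :: "nat \<Rightarrow> real^'n \<Rightarrow> bool" where
  "feasible s x \<longleftrightarrow> (\<forall>i. 0 \<le> x $ i \<and> x $ i \<le> 1) \<and> (\<Sum>i\<in>UNIV. x $ i) = real s"

definition z_hat :: "nat \<Rightarrow> real^'n^'n \<Rightarrow> real \<Rightarrow> real" where
  "z_hat s A t = Sup {Phi_hat s t (Mmat A x) | x. feasible s x}"

definition z_hat_D :: "nat \<Rightarrow> real^'n^'n \<Rightarrow> real \<Rightarrow> real" where
  "z_hat_D s A t = Sup {ln (det (Mmat A x + t *\<^sub>R mat 1)) | x. feasible s x}
                   - real (CARD('n) - s) * ln t"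

end

theory Submission
  imports Defs
begin
lemma sym_inner:
  fixes Y :: "real^'n^'n"
  assumes "transpose Y = Y"
  shows "x \<bullet> (Y *v y) = (Y *v x) \<bullet> y"
proof -
  have e: "Y $ i $ j = Y $ j $ i" for i j
    using assms by (metis transpose_def vec_lambda_beta)
  have "x \<bullet> (Y *v y) = (\<Sum>i\<in>UNIV. \<Sum>j\<in>UNIV. x $ i * Y $ i $ j * y $ j)"
    by (simp add: inner_vec_def matrix_vector_mult_def sum_distrib_left mult.assoc)
  also have "\<dots> = (\<Sum>j\<in>UNIV. \<Sum>i\<in>UNIV. x $ i * Y $ i $ j * y $ j)"
    by (rule sum.swap)
  also have "\<dots> = (\<Sum>j\<in>UNIV. (\<Sum>i\<in>UNIV. Y $ j $ i * x $ i) * y $ j)"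
    by (simp add: sum_distrib_right sum_distrib_left e mult_ac)
  also have "\<dots> = (Y *v x) \<bullet> y"
    by (simp add: inner_vec_def matrix_vector_mult_def mult.commute)
  finally show ?thesis .
qed

definition orthon :: "(nat \<Rightarrow> real^'n) \<Rightarrow> nat \<Rightarrow> bool" where
  "orthon v k \<longleftrightarrow> (\<forall>i\<in>{1..k}. \<forall>j\<in>{1..k}. v i \<bullet> v j = (if i = j then 1 else 0))"

lemma continuous_qf: "continuous_on S (\<lambda>w::real^'n. w \<bullet> (Y *v w))"
  by (intro continuous_intros)

lemma closed_orth: "closed {w::real^'n. \<forall>j\<in>J. w \<bullet> v j = 0}"
proof -
  have "{w::real^'n. \<forall>j\<in>J. w \<bullet> v j = 0} = (\<Inter>j\<in>J. {w. v j \<bullet> w = 0})"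
    by (auto simp: inner_commute)
  then show ?thesis by (simp add: closed_INT closed_hyperplane)
qed


lemma DIM_vec_eq: "DIM(real^'n) = CARD('n)" by simp

lemma spectral_ind:
  fixes Y :: "real^'n^'n"
  assumes sym: "transpose Y = Y"
  shows "k \<le> CARD('n) \<Longrightarrow> \<exists>v lam. orthon v k \<and> (\<forall>i\<in>{1..k}. Y *v v i = lam i *\<^sub>R v i)
     \<and> (\<forall>i\<in>{1..k}. lam i = v i \<bullet> (Y *v v i))
     \<and> (\<forall>i\<in>{1..k}. \<forall>w. norm w = 1 \<and> (\<forall>j\<in>{1..<i}. w \<bullet> v j = 0) \<longrightarrow> w \<bullet> (Y *v w) \<le> lam i)"
proof (induction k)
  case 0
  show ?case by (auto simp: orthon_def)
next
  case (Suc k)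
  then obtain v lam where orth: "orthon v k" and eig: "\<forall>i\<in>{1..k}. Y *v v i = lam i *\<^sub>R v i"
    and lamq: "\<forall>i\<in>{1..k}. lam i = v i \<bullet> (Y *v v i)"
    and inv: "\<forall>i\<in>{1..k}. \<forall>w. norm w = 1 \<and> (\<forall>j\<in>{1..<i}. w \<bullet> v j = 0) \<longrightarrow> w \<bullet> (Y *v w) \<le> lam i"
    by auto
  define S where "S = {w::real^'n. \<forall>j\<in>{1..k}. w \<bullet> v j = 0}"
  define K where "K = sphere (0::real^'n) 1 \<inter> S"
  have "dim (v ` {1..k}) \<le> card (v ` {1..k})" by (rule dim_le_card') simp
  also have "\<dots> \<le> k" using card_image_le[of "{1..k}" v] by simp
  also have "\<dots> < DIM(real^'n)" using Suc.prems by simp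
  finally obtain x :: "real^'n" where x0: "x \<noteq> 0" and xo: "\<And>y. y \<in> span (v ` {1..k}) \<Longrightarrow> orthogonal x y"
    using orthogonal_to_subspace_exists by blast
  have xS: "x \<in> S" using xo unfolding S_def orthogonal_def by (auto intro: span_base)
  have Ssc: "c *\<^sub>R y \<in> S" if "y \<in> S" for c y using that by (simp add: S_def)
  have Sdiff: "y - y' \<in> S" if "y \<in> S" "y' \<in> S" for y y' using that by (simp add: S_def inner_diff_left)
  have Sadd: "y + y' \<in> S" if "y \<in> S" "y' \<in> S" for y y' using that by (simp add: S_def inner_add_left)
  have "x /\<^sub>R norm x \<in> K" using x0 xS Ssc by (simp add: K_def)
  then have Kne: "K \<noteq> {}" by auto
  have "compact K" unfolding K_def S_def
    by (intro compact_Int_closed compact_sphere closed_orth)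
  from continuous_attains_sup[OF this Kne continuous_qf]
  obtain z where zK: "z \<in> K" and zmax: "\<forall>y\<in>K. y \<bullet> (Y *v y) \<le> z \<bullet> (Y *v z)" by blast
  define mu where "mu = z \<bullet> (Y *v z)"
  have zS: "z \<in> S" and zn: "norm z = 1" using zK by (auto simp: K_def)
  have zz: "z \<bullet> z = 1" using zn by (metis power2_norm_eq_inner power_one)
  have max2: "x \<bullet> (Y *v x) \<le> mu * (x \<bullet> x)" if "x \<in> S" for x
  proof (cases "x = 0")
    case True then show ?thesis by simp
  next
    case False
    define y where "y = x /\<^sub>R norm x"
    have "y \<in> K" using False that Ssc by (simp add: K_def y_def)
    then have "y \<bullet> (Y *v y) \<le> mu" using zmax by (simp add: mu_def)
    moreover have "y \<bullet> (Y *v y) = (x \<bullet> (Y *v x)) / (norm x)^2"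
      using False by (simp add: y_def matrix_vector_mult_scaleR power2_eq_square field_simps)
    moreover have "(norm x)^2 > 0" using False by simp
    ultimately have "x \<bullet> (Y *v x) \<le> mu * (norm x)^2" by (simp add: divide_le_eq)
    then show ?thesis by (simp add: power2_norm_eq_inner)
  qed
  have YzS: "Y *v z \<in> S"
    unfolding S_def
  proof (intro CollectI ballI)
    fix j assume j: "j \<in> {1..k}"
    have "(Y *v z) \<bullet> v j = z \<bullet> (Y *v v j)" using sym_inner[OF sym] by metis
    also have "\<dots> = lam j * (z \<bullet> v j)" using eig j by simp
    also have "\<dots> = 0" using zS j by (simp add: S_def)
    finally show "(Y *v z) \<bullet> v j = 0" .
  qed
  define r where "r = Y *v z - mu *\<^sub>R z"
  have rS: "r \<in> S" unfolding r_def using YzS zS Ssc Sdiff by blast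
  have rz: "r \<bullet> z = 0" by (simp add: r_def inner_diff_left inner_diff_right zz mu_def inner_commute)
  have r0: "r = 0"
  proof (rule ccontr)
    assume "r \<noteq> 0"
    define a where "a = r \<bullet> r"
    have a0: "a > 0" using \<open>r \<noteq> 0\<close> by (simp add: a_def)
    have Yz: "Y *v z = r + mu *\<^sub>R z" by (simp add: r_def)
    have rYz: "r \<bullet> (Y *v z) = a" by (simp add: Yz inner_add_right rz a_def)
    have zYr: "z \<bullet> (Y *v r) = a" using sym_inner[OF sym, of z r] rYz by (simp add: inner_commute)
    define q where "q = r \<bullet> (Y *v r)"
    have key: "2 * e * a + e^2 * q \<le> mu * e^2 * a" for e
    proof -
      have mem: "z + e *\<^sub>R r \<in> S" using zS rS Ssc Sadd by blast
      have E1: "(z + e *\<^sub>R r) \<bullet> (Y *v (z + e *\<^sub>R r)) = mu + 2 * e * a + e^2 * q"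
        by (simp add: matrix_vector_right_distrib matrix_vector_mult_scaleR inner_add_left inner_add_right
              rYz zYr q_def mu_def power2_eq_square algebra_simps)
      have E2: "(z + e *\<^sub>R r) \<bullet> (z + e *\<^sub>R r) = 1 + e^2 * a"
        by (simp add: inner_add_left inner_add_right zz rz inner_commute a_def power2_eq_square)
      have "mu + 2 * e * a + e^2 * q \<le> mu * (1 + e^2 * a)"
        using max2[OF mem] unfolding E1 E2 .
      then show ?thesis by (simp add: ring_distribs)
    qed
    define b where "b = mu * a - q"
    define e where "e = a / (\<bar>b\<bar> + 1)"
    have e0: "e > 0" using a0 by (simp add: e_def)
    have "2 * e * a \<le> e^2 * b" using key[of e] by (simp add: b_def algebra_simps)
    then have "2 * a \<le> e * b" using e0 by (simp add: power2_eq_square mult.assoc)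
    also have "\<dots> \<le> e * \<bar>b\<bar>" using e0 by (simp add: mult_left_mono)
    also have "\<dots> < a" using a0 by (simp add: e_def field_simps)
    finally show False using a0 by simp
  qed
  have Yzmu: "Y *v z = mu *\<^sub>R z" using r0 by (simp add: r_def)
  define v' where "v' = v(Suc k := z)"
  define lam' where "lam' = lam(Suc k := mu)"
  have zv: "z \<bullet> v j = 0" if "j \<in> {1..k}" for j using zS that by (simp add: S_def)
  have "orthon v' (Suc k)"
    unfolding orthon_def
  proof (intro ballI)
    fix i j assume i: "i \<in> {1..Suc k}" and j: "j \<in> {1..Suc k}"
    show "v' i \<bullet> v' j = (if i = j then 1 else 0)"
    proof (cases "i = Suc k")
      case True
      then show ?thesis using j zv[of j] zz by (auto simp: v'_def)
    next
      case False
      then have i': "i \<in> {1..k}" using i by auto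
      show ?thesis
      proof (cases "j = Suc k")
        case True
        then show ?thesis using i' zv[of i] False by (auto simp: v'_def inner_commute)
      next
        case False
        then have "j \<in> {1..k}" using j by auto
        then show ?thesis using i' orth \<open>i \<noteq> Suc k\<close> False by (simp add: orthon_def v'_def)
      qed
    qed
  qed
  moreover have "\<forall>i\<in>{1..Suc k}. Y *v v' i = lam' i *\<^sub>R v' i"
    using eig Yzmu by (auto simp: v'_def lam'_def le_Suc_eq)
  moreover have "\<forall>i\<in>{1..Suc k}. lam' i = v' i \<bullet> (Y *v v' i)"
    using lamq by (auto simp: v'_def lam'_def le_Suc_eq mu_def)
  moreover have "\<forall>i\<in>{1..Suc k}. \<forall>w. norm w = 1 \<and> (\<forall>j\<in>{1..<i}. w \<bullet> v' j = 0) \<longrightarrow> w \<bullet> (Y *v w) \<le> lam' i"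
  proof (intro ballI allI impI)
    fix i w assume i: "i \<in> {1..Suc k}" and w: "norm w = 1 \<and> (\<forall>j\<in>{1..<i}. w \<bullet> v' j = 0)"
    show "w \<bullet> (Y *v w) \<le> lam' i"
    proof (cases "i = Suc k")
      case True
      then have "w \<in> K" using w by (auto simp: K_def S_def v'_def)
      then show ?thesis using zmax True by (simp add: lam'_def mu_def)
    next
      case False
      then have i': "i \<in> {1..k}" using i by auto
      have "\<forall>j\<in>{1..<i}. w \<bullet> v j = 0" using w i' by (auto simp: v'_def)
      then show ?thesis using inv i' w False by (auto simp: lam'_def)
    qed
  qed
  ultimately show ?case by blast
qed

lemma orthon_inj: "orthon v n \<Longrightarrow> inj_on v {1..n}"
  unfolding orthon_def inj_on_def by (metis one_neq_zero)

lemma orthon_nz: "orthon v n \<Longrightarrow> i \<in> {1..n} \<Longrightarrow> v i \<noteq> 0"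
  unfolding orthon_def by (metis inner_zero_left zero_neq_one)

lemma parseval:
  fixes v :: "nat \<Rightarrow> real^'n"
  assumes o: "orthon v CARD('n)"
  shows "w = (\<Sum>i=1..CARD('n). (w \<bullet> v i) *\<^sub>R v i)"
proof (rule ccontr)
  let ?n = "CARD('n)"
  define r where "r = w - (\<Sum>i=1..?n. (w \<bullet> v i) *\<^sub>R v i)"
  assume "w \<noteq> (\<Sum>i=1..?n. (w \<bullet> v i) *\<^sub>R v i)"
  then have r0: "r \<noteq> 0" by (simp add: r_def)
  have rv: "r \<bullet> v j = 0" if j: "j \<in> {1..?n}" for j
  proof -
    have "(\<Sum>i=1..?n. (w \<bullet> v i) *\<^sub>R v i) \<bullet> v j = (\<Sum>i=1..?n. (w \<bullet> v i) * (v i \<bullet> v j))"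
      by (simp add: inner_sum_left)
    also have "\<dots> = (\<Sum>i=1..?n. if i = j then w \<bullet> v j else 0)"
      using o j by (intro sum.cong) (auto simp: orthon_def)
    also have "\<dots> = w \<bullet> v j" using j by simp
    finally show ?thesis by (simp add: r_def inner_diff_left)
  qed
  define T where "T = insert r (v ` {1..?n})"
  have "pairwise orthogonal T"
    unfolding T_def pairwise_def orthogonal_def
    using o rv by (auto simp: orthon_def inner_commute)
  moreover have "0 \<notin> T" using r0 orthon_nz[OF o] by (auto simp: T_def)
  ultimately have "independent T" by (rule pairwise_orthogonal_independent)
  then have "card T \<le> DIM(real^'n)" using independent_bound by blast
  moreover have "r \<notin> v ` {1..?n}"
  proof
    assume "r \<in> v ` {1..?n}"
    then obtain j where j: "j \<in> {1..?n}" "r = v j" by auto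
    then have "r \<bullet> v j = 1" using o by (simp add: orthon_def)
    then show False using rv[OF j(1)] by simp
  qed
  moreover have "card (v ` {1..?n}) = ?n" using card_image[OF orthon_inj[OF o]] by simp
  ultimately show False by (simp add: T_def)
qed

lemma qf_expand:
  fixes v :: "nat \<Rightarrow> real^'n" and Y :: "real^'n^'n"
  assumes o: "orthon v CARD('n)" and e: "\<forall>i\<in>{1..CARD('n)}. Y *v v i = lam i *\<^sub>R v i"
  shows "w \<bullet> (Y *v w) = (\<Sum>i=1..CARD('n). lam i * (w \<bullet> v i)^2)"
proof -
  have "Y *v w = Y *v (\<Sum>i=1..CARD('n). (w \<bullet> v i) *\<^sub>R v i)" using parseval[OF o, of w] by simp
  also have "\<dots> = (\<Sum>i=1..CARD('n). (w \<bullet> v i) *\<^sub>R (lam i *\<^sub>R v i))"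
    using e by (simp add: vec.sum matrix_vector_mult_scaleR)
  finally have "w \<bullet> (Y *v w) = (\<Sum>i=1..CARD('n). (w \<bullet> v i) * lam i * (w \<bullet> v i))"
    by (simp add: inner_sum_right mult.assoc)
  then show ?thesis by (simp add: power2_eq_square mult_ac)
qed

lemma norm_expand:
  fixes v :: "nat \<Rightarrow> real^'n"
  assumes o: "orthon v CARD('n)"
  shows "w \<bullet> w = (\<Sum>i=1..CARD('n). (w \<bullet> v i)^2)"
proof -
  have "w \<bullet> w = w \<bullet> (\<Sum>i=1..CARD('n). (w \<bullet> v i) *\<^sub>R v i)" using parseval[OF o, of w] by simp
  then show ?thesis by (simp add: inner_sum_right power2_eq_square)
qed

lemma det_eigbasis:
  fixes X :: "real^'n^'n" and v :: "nat \<Rightarrow> real^'n"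
  assumes o: "orthon v CARD('n)" and e: "\<forall>i\<in>{1..CARD('n)}. X *v v i = lam i *\<^sub>R v i"
  shows "det X = (\<Prod>i=1..CARD('n). lam i)"
proof -
  let ?n = "CARD('n)"
  obtain h where h: "bij_betw h {1..?n} (UNIV::'n set)"
    using ex_bij_betw_nat_finite_1[of "UNIV::'n set"] by auto
  define f where "f = inv_into {1..?n} h"
  have f: "bij_betw f UNIV {1..?n}" unfolding f_def by (rule bij_betw_inv_into[OF h])
  have fin: "f c \<in> {1..?n}" for c using f by (meson UNIV_I bij_betwE)
  have finj: "f c = f c' \<longleftrightarrow> c = c'" for c c' using f by (metis UNIV_I bij_betw_iff_bijections)
  define Q :: "real^'n^'n" where "Q = (\<chi> r c. v (f c) $ r)"
  have QXQ: "((transpose Q ** Z) ** Q) $ c $ c' = v (f c) \<bullet> (Z *v v (f c'))" for Z :: "real^'n^'n" and c c'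
  proof -
    have "((transpose Q ** Z) ** Q) $ c $ c' = (\<Sum>k\<in>UNIV. \<Sum>l\<in>UNIV. v (f c) $ l * Z $ l $ k * v (f c') $ k)"
      by (simp add: Q_def matrix_matrix_mult_def transpose_def sum_distrib_right)
    also have "\<dots> = (\<Sum>l\<in>UNIV. \<Sum>k\<in>UNIV. v (f c) $ l * Z $ l $ k * v (f c') $ k)"
      by (rule sum.swap)
    also have "\<dots> = v (f c) \<bullet> (Z *v v (f c'))"
      by (simp add: inner_vec_def matrix_vector_mult_def sum_distrib_left mult.assoc)
    finally show ?thesis .
  qed
  have QQ: "transpose Q ** Q = mat 1"
  proof -
    have "(transpose Q ** Q) $ c $ c' = v (f c) \<bullet> v (f c')" for c c'
      by (simp add: Q_def matrix_matrix_mult_def transpose_def inner_vec_def)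
    also have "v (f c) \<bullet> v (f c') = (if c = c' then 1 else 0)" for c c'
      using o fin[of c] fin[of c'] finj[of c c'] by (simp add: orthon_def)
    finally show ?thesis by (simp add: vec_eq_iff mat_def)
  qed
  have dQ: "det Q * det Q = 1"
    using det_mul[of "transpose Q" Q] QQ by simp
  have D: "det ((transpose Q ** X) ** Q) = det X"
    using det_mul[of "transpose Q ** X" Q] det_mul[of "transpose Q" X] dQ
    by (simp add: algebra_simps)
  have offd: "((transpose Q ** X) ** Q) $ c $ c' = (if c = c' then lam (f c) else 0)" for c c'
  proof -
    have "((transpose Q ** X) ** Q) $ c $ c' = lam (f c') * (v (f c) \<bullet> v (f c'))"
      using QXQ e fin[of c'] by simp
    then show ?thesis
      using o fin[of c] fin[of c'] finj[of c c'] by (simp add: orthon_def)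
  qed
  have "det ((transpose Q ** X) ** Q) = (\<Prod>c\<in>UNIV. lam (f c))"
    by (subst det_diagonal) (simp_all add: offd)
  also have "\<dots> = (\<Prod>i=1..?n. lam i)"
    by (rule prod.reindex_bij_betw[OF f])
  finally show ?thesis using D by simp
qed

lemma prod_roots_unique:
  fixes l l' :: "nat \<Rightarrow> real"
  shows "(\<forall>i j. 1 \<le> i \<and> i \<le> j \<and> j \<le> k \<longrightarrow> l j \<le> l i) \<Longrightarrow>
         (\<forall>i j. 1 \<le> i \<and> i \<le> j \<and> j \<le> k \<longrightarrow> l' j \<le> l' i) \<Longrightarrow>
         (\<Prod>i=1..k. [:- l i, 1:]) = (\<Prod>i=1..k. [:- l' i, 1:]) \<Longrightarrow> \<forall>i\<in>{1..k}. l i = l' i"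
proof (induction k arbitrary: l l')
  case 0
  then show ?case by simp
next
  case (Suc k)
  have roots: "poly (\<Prod>i=1..Suc k. [:- g i, 1:]) x = 0 \<longleftrightarrow> (\<exists>i\<in>{1..Suc k}. x = g i)" for g :: "nat \<Rightarrow> real" and x
  proof -
    have "poly (\<Prod>i=1..Suc k. [:- g i, 1:]) x = (\<Prod>i=1..Suc k. x - g i)" unfolding poly_prod by (rule prod.cong) simp_all
    moreover have "(\<Prod>i=1..Suc k. x - g i) = 0 \<longleftrightarrow> (\<exists>i\<in>{1..Suc k}. x - g i = 0)"
      by (rule prod_zero_iff) simp
    ultimately show ?thesis by simp
  qed
  have "poly (\<Prod>i=1..Suc k. [:- l i, 1:]) (l 1) = 0" unfolding roots by (rule bexI[of _ 1]) auto
  then have "poly (\<Prod>i=1..Suc k. [:- l' i, 1:]) (l 1) = 0" using Suc.prems(3) by metis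
  then have "\<exists>i\<in>{1..Suc k}. l 1 = l' i" unfolding roots .
  then have a1: "l 1 \<le> l' 1" using Suc.prems(2) by auto
  have "poly (\<Prod>i=1..Suc k. [:- l' i, 1:]) (l' 1) = 0" unfolding roots by (rule bexI[of _ 1]) auto
  then have "poly (\<Prod>i=1..Suc k. [:- l i, 1:]) (l' 1) = 0" using Suc.prems(3) by metis
  then have "\<exists>i\<in>{1..Suc k}. l' 1 = l i" unfolding roots .
  then have a2: "l' 1 \<le> l 1" using Suc.prems(1) by auto
  have eq1: "l 1 = l' 1" using a1 a2 by simp
  have split: "(\<Prod>i=1..Suc k. [:- g i, 1:]) = [:- g 1, 1:] * (\<Prod>i=1..k. [:- g (Suc i), 1:])" for g :: "nat \<Rightarrow> real"
  proof -
    have "(\<Prod>i=1..Suc k. [:- g i, 1:]) = [:- g 1, 1:] * (\<Prod>i=Suc 1..Suc k. [:- g i, 1:])"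
      by (rule prod.atLeast_Suc_atMost) simp
    also have "(\<Prod>i=Suc 1..Suc k. [:- g i, 1:]) = (\<Prod>i=1..k. [:- g (Suc i), 1:])"
      by (rule prod.shift_bounds_cl_Suc_ivl)
    finally show ?thesis .
  qed
  have "[:- l 1, 1:] * (\<Prod>i=1..k. [:- l (Suc i), 1:]) = [:- l 1, 1:] * (\<Prod>i=1..k. [:- l' (Suc i), 1:])"
    using Suc.prems(3) split[of l] split[of l'] eq1 by simp
  moreover have nz: "[:- l 1, 1:] \<noteq> (0::real poly)" by simp
  ultimately have "(\<Prod>i=1..k. [:- l (Suc i), 1:]) = (\<Prod>i=1..k. [:- l' (Suc i), 1:])"
    using mult_left_cancel[OF nz] by blast
  moreover have "\<forall>i j. 1 \<le> i \<and> i \<le> j \<and> j \<le> k \<longrightarrow> l (Suc j) \<le> l (Suc i)" using Suc.prems(1) by auto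
  moreover have "\<forall>i j. 1 \<le> i \<and> i \<le> j \<and> j \<le> k \<longrightarrow> l' (Suc j) \<le> l' (Suc i)" using Suc.prems(2) by auto
  ultimately have IH: "\<forall>i\<in>{1..k}. l (Suc i) = l' (Suc i)"
    using Suc.IH[of "\<lambda>i. l (Suc i)" "\<lambda>i. l' (Suc i)"] by blast
  show ?case
  proof
    fix i assume i: "i \<in> {1..Suc k}"
    show "l i = l' i"
    proof (cases "i = 1")
      case True then show ?thesis using eq1 by simp
    next
      case False
      then obtain i' where "i = Suc i'" "i' \<in> {1..k}" using i
        by (cases i) auto
      then show ?thesis using IH by simp
    qed
  qed
qed

lemma sorted_eigs_unique:
  fixes X :: "real^'n^'n"
  assumes "is_sorted_eigs X l" "is_sorted_eigs X l'"
  shows "l = l'"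
proof
  fix i
  let ?n = "CARD('n)"
  have "poly (\<Prod>i=1..?n. [:- l i, 1:]) = poly (\<Prod>i=1..?n. [:- l' i, 1:])"
  proof
    fix mu
    show "poly (\<Prod>i=1..?n. [:- l i, 1:]) mu = poly (\<Prod>i=1..?n. [:- l' i, 1:]) mu"
      using assms unfolding is_sorted_eigs_def by (simp add: poly_prod)
  qed
  then have "(\<Prod>i=1..?n. [:- l i, 1:]) = (\<Prod>i=1..?n. [:- l' i, 1:])"
    by (simp add: poly_eq_poly_eq_iff)
  then have "\<forall>i\<in>{1..?n}. l i = l' i"
    using prod_roots_unique[of ?n l l'] assms unfolding is_sorted_eigs_def by blast
  then show "l i = l' i" using assms unfolding is_sorted_eigs_def by (cases "i \<in> {1..?n}") auto
qed

lemma mat_mult_vec: "mat c *v (x::real^'n) = c *\<^sub>R x"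
proof -
  have "(\<Sum>j\<in>UNIV. (if i = j then c else 0) * x $ j) = c * x $ i" for i
  proof -
    have "(\<Sum>j\<in>UNIV. (if i = j then c else 0) * x $ j) = (\<Sum>j\<in>UNIV. if i = j then c * x $ j else 0)"
      by (rule sum.cong) auto
    then show ?thesis by simp
  qed
  then show ?thesis by (simp add: vec_eq_iff matrix_vector_mult_def mat_def)
qed

lemma eig_exists:
  fixes Y :: "real^'n^'n" assumes sym: "transpose Y = Y"
  shows "\<exists>v. orthon v CARD('n) \<and> (\<forall>i\<in>{1..CARD('n)}. Y *v v i = eigs Y i *\<^sub>R v i) \<and> is_sorted_eigs Y (eigs Y)"
proof -
  let ?n = "CARD('n)"
  obtain v lam where o: "orthon v ?n" and e: "\<forall>i\<in>{1..?n}. Y *v v i = lam i *\<^sub>R v i"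
    and lq: "\<forall>i\<in>{1..?n}. lam i = v i \<bullet> (Y *v v i)"
    and inv: "\<forall>i\<in>{1..?n}. \<forall>w. norm w = 1 \<and> (\<forall>j\<in>{1..<i}. w \<bullet> v j = 0) \<longrightarrow> w \<bullet> (Y *v w) \<le> lam i"
    using spectral_ind[OF sym, of ?n] by auto
  define lam0 where "lam0 i = (if i \<in> {1..?n} then lam i else 0)" for i
  have srt: "lam0 j \<le> lam0 i" if "1 \<le> i" "i \<le> j" "j \<le> ?n" for i j
  proof -
    have vj: "v j \<bullet> v j = 1" using o that by (simp add: orthon_def)
    then have "norm (v j) = 1" by (simp add: norm_eq_sqrt_inner)
    moreover have "\<forall>l\<in>{1..<i}. v j \<bullet> v l = 0" using o that by (auto simp: orthon_def)
    ultimately have "v j \<bullet> (Y *v v j) \<le> lam i" using inv that by auto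
    then show ?thesis using lq that by (simp add: lam0_def)
  qed
  have cp: "det (mat mu - Y) = (\<Prod>i=1..?n. mu - lam0 i)" for mu
  proof -
    have "\<forall>i\<in>{1..?n}. (mat mu - Y) *v v i = (mu - lam i) *\<^sub>R v i"
      using e by (simp add: matrix_vector_mult_diff_rdistrib mat_mult_vec scaleR_diff_left)
    then have "det (mat mu - Y) = (\<Prod>i=1..?n. mu - lam i)" by (rule det_eigbasis[OF o])
    then show ?thesis by (simp add: lam0_def)
  qed
  have ise: "is_sorted_eigs Y lam0"
    unfolding is_sorted_eigs_def using srt cp by (auto simp: lam0_def)
  then have "eigs Y = lam0"
    unfolding eigs_def using the_equality[of "is_sorted_eigs Y" lam0] sorted_eigs_unique[of Y _ lam0] by blast
  then show ?thesis using o e ise by (auto simp: lam0_def)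
qed

lemma Mmat_entry: "Mmat A x $ j $ k = (\<Sum>i\<in>UNIV. x $ i * (A $ j $ i * A $ k $ i))"
  by (simp add: Mmat_def sum_component)

lemma Mmat_sym: "transpose (Mmat A x) = Mmat A x"
  by (simp add: vec_eq_iff transpose_def Mmat_entry mult.commute)

lemma Mmat_qf: "w \<bullet> (Mmat A x *v w) = (\<Sum>i\<in>UNIV. x $ i * (\<Sum>j\<in>UNIV. A $ j $ i * w $ j)^2)"
proof -
  have "w \<bullet> (Mmat A x *v w) = (\<Sum>j\<in>UNIV. \<Sum>k\<in>UNIV. \<Sum>i\<in>UNIV. x $ i * ((A $ j $ i * w $ j) * (A $ k $ i * w $ k)))"
    by (simp add: inner_vec_def matrix_vector_mult_def Mmat_entry sum_distrib_left sum_distrib_right mult_ac)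
  also have "\<dots> = (\<Sum>j\<in>UNIV. \<Sum>i\<in>UNIV. \<Sum>k\<in>UNIV. x $ i * ((A $ j $ i * w $ j) * (A $ k $ i * w $ k)))"
    by (rule sum.cong[OF refl], rule sum.swap)
  also have "\<dots> = (\<Sum>i\<in>UNIV. \<Sum>j\<in>UNIV. \<Sum>k\<in>UNIV. x $ i * ((A $ j $ i * w $ j) * (A $ k $ i * w $ k)))"
    by (rule sum.swap)
  also have "\<dots> = (\<Sum>i\<in>UNIV. x $ i * (\<Sum>j\<in>UNIV. A $ j $ i * w $ j)^2)"
    by (simp add: power2_eq_square sum_distrib_left sum_distrib_right mult_ac)
  finally show ?thesis .
qed

lemma Mmat_psd: "(\<forall>i. 0 \<le> x $ i) \<Longrightarrow> Mmat A x \<in> psd_cone"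
  unfolding psd_cone_def using Mmat_sym by (auto simp: Mmat_qf intro!: sum_nonneg)

lemma greedy:
  fixes mu r :: "nat \<Rightarrow> real"
  assumes mono: "\<forall>i j. 1 \<le> i \<and> i \<le> j \<and> j \<le> n \<longrightarrow> mu j \<le> mu i"
    and r: "\<forall>j\<in>{1..n}. 0 \<le> r j \<and> r j \<le> 1"
    and sr: "(\<Sum>j=1..n. r j) = (\<Sum>j=1..n. if k \<le> j then 1 else 0)"
    and k: "1 \<le> k" "k \<le> n"
  shows "(\<Sum>j=1..n. if k \<le> j then mu j else 0) \<le> (\<Sum>j=1..n. mu j * r j)"
proof -
  define ind where "ind j = (if k \<le> j then 1 else (0::real))" for j
  have t: "mu j * r j - (if k \<le> j then mu j else 0) = (mu j - mu k) * (r j - ind j) + mu k * (r j - ind j)" for j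
    by (simp add: ind_def algebra_simps)
  have nn: "0 \<le> (mu j - mu k) * (r j - ind j)" if "j \<in> {1..n}" for j
  proof (cases "k \<le> j")
    case True
    then have "mu j \<le> mu k" using mono k that by auto
    moreover have "r j - ind j \<le> 0" using r that True by (simp add: ind_def)
    ultimately show ?thesis by (simp add: mult_nonpos_nonpos)
  next
    case False
    then have "mu k \<le> mu j" using mono k that by auto
    moreover have "0 \<le> r j - ind j" using r that False by (simp add: ind_def)
    ultimately show ?thesis by simp
  qed
  have "(\<Sum>j=1..n. mu j * r j) - (\<Sum>j=1..n. if k \<le> j then mu j else 0)
      = (\<Sum>j=1..n. (mu j - mu k) * (r j - ind j)) + mu k * ((\<Sum>j=1..n. r j) - (\<Sum>j=1..n. ind j))"
    by (simp add: sum_subtractf[symmetric] t sum.distrib sum_distrib_left right_diff_distrib)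
  also have "(\<Sum>j=1..n. ind j) = (\<Sum>j=1..n. r j)" using sr by (simp add: ind_def)
  finally have "(\<Sum>j=1..n. mu j * r j) - (\<Sum>j=1..n. if k \<le> j then mu j else 0) = (\<Sum>j=1..n. (mu j - mu k) * (r j - ind j))"
    by simp
  moreover have "0 \<le> (\<Sum>j=1..n. (mu j - mu k) * (r j - ind j))" using nn by (intro sum_nonneg) auto
  ultimately show ?thesis by simp
qed

lemma telesc: "1 \<le> i \<Longrightarrow> w i = w 1 + (\<Sum>k=2..i. w k - w (k - 1))" for w :: "nat \<Rightarrow> real"
proof (induction i)
  case 0 then show ?case by simp
next
  case (Suc i)
  show ?case
  proof (cases "i = 0")
    case True then show ?thesis by simp
  next
    case False
    then have "w i = w 1 + (\<Sum>k=2..i. w k - w (k - 1))" using Suc.IH by simp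
    moreover have "(\<Sum>k=2..Suc i. w k - w (k - 1)) = (\<Sum>k=2..i. w k - w (k - 1)) + (w (Suc i) - w i)"
      using False by simp
    ultimately show ?thesis by simp
  qed
qed

lemma decomp:
  fixes w X :: "nat \<Rightarrow> real"
  shows "(\<Sum>i=1..n. w i * X i) = w 1 * (\<Sum>i=1..n. X i) + (\<Sum>k=2..n. (w k - w (k - 1)) * (\<Sum>i=1..n. if k \<le> i then X i else 0))"
proof -
  have wi: "w i = w 1 + (\<Sum>k=2..n. if k \<le> i then w k - w (k - 1) else 0)" if "i \<in> {1..n}" for i
  proof -
    have "(\<Sum>k=2..n. if k \<le> i then w k - w (k - 1) else 0) = (\<Sum>k\<in>{k\<in>{2..n}. k \<le> i}. w k - w (k - 1))"
      by (rule sum.inter_filter[symmetric]) simp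
    also have "{k\<in>{2..n}. k \<le> i} = {2..i}" using that by auto
    finally show ?thesis using telesc[of i w] that by simp
  qed
  have "(\<Sum>i=1..n. w i * X i) = (\<Sum>i=1..n. w 1 * X i + (\<Sum>k=2..n. (if k \<le> i then w k - w (k - 1) else 0) * X i))"
  proof (rule sum.cong[OF refl])
    fix i assume i: "i \<in> {1..n}"
    have "w i * X i = (w 1 + (\<Sum>k=2..n. if k \<le> i then w k - w (k - 1) else 0)) * X i"
      using wi[OF i] by metis
    then show "w i * X i = w 1 * X i + (\<Sum>k=2..n. (if k \<le> i then w k - w (k - 1) else 0) * X i)"
      by (simp add: distrib_right sum_distrib_right)
  qed
  also have "\<dots> = w 1 * (\<Sum>i=1..n. X i) + (\<Sum>i=1..n. \<Sum>k=2..n. (if k \<le> i then w k - w (k - 1) else 0) * X i)"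
    by (simp add: sum.distrib sum_distrib_left)
  also have "(\<Sum>i=1..n. \<Sum>k=2..n. (if k \<le> i then w k - w (k - 1) else 0) * X i)
      = (\<Sum>k=2..n. \<Sum>i=1..n. (if k \<le> i then w k - w (k - 1) else 0) * X i)"
    by (rule sum.swap)
  also have "\<dots> = (\<Sum>k=2..n. (w k - w (k - 1)) * (\<Sum>i=1..n. if k \<le> i then X i else 0))"
  proof (rule sum.cong[OF refl])
    fix k
    have "(if k \<le> i then w k - w (k - 1) else 0) * X i = (w k - w (k - 1)) * (if k \<le> i then X i else 0)" for i
      by simp
    then show "(\<Sum>i=1..n. (if k \<le> i then w k - w (k - 1) else 0) * X i) = (w k - w (k - 1)) * (\<Sum>i=1..n. if k \<le> i then X i else 0)"
      by (simp only: sum_distrib_left)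
  qed
  finally show ?thesis .
qed

lemma rearr:
  fixes P :: "nat \<Rightarrow> nat \<Rightarrow> real" and w mu :: "nat \<Rightarrow> real"
  assumes P0: "\<forall>i\<in>{1..n}. \<forall>j\<in>{1..n}. 0 \<le> P i j"
    and col: "\<forall>j\<in>{1..n}. (\<Sum>i=1..n. P i j) = 1"
    and row: "\<forall>i\<in>{1..n}. (\<Sum>j=1..n. P i j) = 1"
    and wm: "\<forall>i j. 1 \<le> i \<and> i \<le> j \<and> j \<le> n \<longrightarrow> w i \<le> w j"
    and mm: "\<forall>i j. 1 \<le> i \<and> i \<le> j \<and> j \<le> n \<longrightarrow> mu j \<le> mu i"
  shows "(\<Sum>j=1..n. w j * mu j) \<le> (\<Sum>i=1..n. w i * (\<Sum>j=1..n. mu j * P i j))"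
proof -
  define X where "X i = (\<Sum>j=1..n. mu j * P i j)" for i
  have sX: "(\<Sum>i=1..n. X i) = (\<Sum>j=1..n. mu j)"
  proof -
    have "(\<Sum>i=1..n. X i) = (\<Sum>j=1..n. \<Sum>i=1..n. mu j * P i j)"
      unfolding X_def by (rule sum.swap)
    also have "\<dots> = (\<Sum>j=1..n. mu j)"
      using col by (intro sum.cong) (simp_all add: sum_distrib_left[symmetric])
    finally show ?thesis .
  qed
  have kk: "(\<Sum>i=1..n. if k \<le> i then mu i else 0) \<le> (\<Sum>i=1..n. if k \<le> i then X i else 0)"
    if k: "k \<in> {2..n}" for k
  proof -
    define r where "r j = (\<Sum>i=1..n. if k \<le> i then P i j else 0)" for j
    have "(\<Sum>i=1..n. if k \<le> i then X i else 0) = (\<Sum>i=1..n. \<Sum>j=1..n. if k \<le> i then mu j * P i j else 0)"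
    proof (rule sum.cong[OF refl])
      fix i show "(if k \<le> i then X i else 0) = (\<Sum>j=1..n. if k \<le> i then mu j * P i j else 0)"
        by (cases "k \<le> i") (simp_all add: X_def)
    qed
    also have "\<dots> = (\<Sum>j=1..n. \<Sum>i=1..n. if k \<le> i then mu j * P i j else 0)"
      by (rule sum.swap)
    also have "\<dots> = (\<Sum>j=1..n. mu j * r j)"
      by (simp add: r_def sum_distrib_left if_distrib cong: if_cong)
    finally have e1: "(\<Sum>i=1..n. if k \<le> i then X i else 0) = (\<Sum>j=1..n. mu j * r j)" .
    have rb: "\<forall>j\<in>{1..n}. 0 \<le> r j \<and> r j \<le> 1"
    proof
      fix j assume j: "j \<in> {1..n}"
      have "0 \<le> r j" unfolding r_def using P0 j by (intro sum_nonneg) auto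
      moreover have "r j \<le> (\<Sum>i=1..n. P i j)" unfolding r_def using P0 j by (intro sum_mono) auto
      ultimately show "0 \<le> r j \<and> r j \<le> 1" using col j by simp
    qed
    have "(\<Sum>j=1..n. r j) = (\<Sum>i=1..n. \<Sum>j=1..n. if k \<le> i then P i j else 0)"
      unfolding r_def by (rule sum.swap)
    also have "\<dots> = (\<Sum>i=1..n. if k \<le> i then 1 else 0)"
      using row by (intro sum.cong) auto
    finally have sr: "(\<Sum>j=1..n. r j) = (\<Sum>j=1..n. if k \<le> j then 1 else 0)" .
    show ?thesis unfolding e1 by (rule greedy[OF mm rb sr]) (use k in auto)
  qed
  have "(\<Sum>j=1..n. w j * mu j) = w 1 * (\<Sum>i=1..n. mu i) + (\<Sum>k=2..n. (w k - w (k - 1)) * (\<Sum>i=1..n. if k \<le> i then mu i else 0))"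
    by (rule decomp)
  also have "\<dots> \<le> w 1 * (\<Sum>i=1..n. X i) + (\<Sum>k=2..n. (w k - w (k - 1)) * (\<Sum>i=1..n. if k \<le> i then X i else 0))"
  proof -
    have "(w k - w (k - 1)) * (\<Sum>i=1..n. if k \<le> i then mu i else 0) \<le> (w k - w (k - 1)) * (\<Sum>i=1..n. if k \<le> i then X i else 0)"
      if "k \<in> {2..n}" for k
    proof (rule mult_left_mono[OF kk[OF that]])
      show "0 \<le> w k - w (k - 1)" using wm that by auto
    qed
    then have "(\<Sum>k=2..n. (w k - w (k - 1)) * (\<Sum>i=1..n. if k \<le> i then mu i else 0)) \<le> (\<Sum>k=2..n. (w k - w (k - 1)) * (\<Sum>i=1..n. if k \<le> i then X i else 0))"
      by (intro sum_mono) auto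
    then show ?thesis using sX by simp
  qed
  also have "\<dots> = (\<Sum>i=1..n. w i * X i)" by (rule decomp[symmetric])
  finally show ?thesis by (simp add: X_def)
qed

lemma psd_sym: "Y \<in> psd_cone \<Longrightarrow> transpose Y = Y" by (simp add: psd_cone_def)

lemma eig_val:
  assumes "orthon v CARD('n)" "\<forall>i\<in>{1..CARD('n)}. (Y::real^'n^'n) *v v i = eigs Y i *\<^sub>R v i" "i \<in> {1..CARD('n)}"
  shows "eigs Y i = v i \<bullet> (Y *v v i)"
  using assms by (simp add: orthon_def)

lemma psd_eigs_nonneg:
  fixes Y :: "real^'n^'n"
  assumes "Y \<in> psd_cone" shows "0 \<le> eigs Y i"
proof -
  obtain v where o: "orthon v CARD('n)" and e: "\<forall>i\<in>{1..CARD('n)}. Y *v v i = eigs Y i *\<^sub>R v i"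
    and ise: "is_sorted_eigs Y (eigs Y)"
    using eig_exists[OF psd_sym[OF assms]] by blast
  show ?thesis
  proof (cases "i \<in> {1..CARD('n)}")
    case True
    then show ?thesis using eig_val[OF o e True] assms by (simp add: psd_cone_def)
  next
    case False
    then show ?thesis using ise by (simp add: is_sorted_eigs_def)
  qed
qed

lemma sum_split_at: "s \<le> (n::nat) \<Longrightarrow> (\<Sum>i=1..n. f i) = (\<Sum>i=1..s. f i) + (\<Sum>i=s+1..n. (f i :: real))"
proof -
  assume "s \<le> n"
  have "{1..n} = {1..s} \<union> {s+1..n}" using \<open>s \<le> n\<close> by auto
  moreover have "{1..s} \<inter> {s+1..n} = {}" by auto
  ultimately show ?thesis by (simp add: sum.union_disjoint)
qed

lemma convex_psd: "convex (psd_cone :: (real^'n^'n) set)"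
  unfolding convex_def psd_cone_def
proof (intro ballI allI impI, simp only: mem_Collect_eq, intro conjI allI)
  fix X Y :: "real^'n^'n" and a b :: real and w :: "real^'n"
  assume X: "transpose X = X \<and> (\<forall>v. 0 \<le> v \<bullet> (X *v v))" and Y: "transpose Y = Y \<and> (\<forall>v. 0 \<le> v \<bullet> (Y *v v))"
    and ab: "0 \<le> a" "0 \<le> b" "a + b = 1"
  show "transpose (a *\<^sub>R X + b *\<^sub>R Y) = a *\<^sub>R X + b *\<^sub>R Y"
  proof -
    have "transpose (a *\<^sub>R X + b *\<^sub>R Y) = a *\<^sub>R transpose X + b *\<^sub>R transpose Y"
      by (simp add: vec_eq_iff transpose_def)
    then show ?thesis using X Y by simp
  qed
  have "w \<bullet> ((a *\<^sub>R X + b *\<^sub>R Y) *v w) = a * (w \<bullet> (X *v w)) + b * (w \<bullet> (Y *v w))"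
    by (simp add: matrix_vector_mult_add_rdistrib scaleR_matrix_vector_assoc[symmetric] inner_add_right)
  then show "0 \<le> w \<bullet> ((a *\<^sub>R X + b *\<^sub>R Y) *v w)" using X Y ab by simp
qed

lemma phi_hat_bound:
  fixes M :: "real^'n^'n"
  assumes M: "M \<in> psd_cone" and t: "t > 0" and s: "1 \<le> s" "s \<le> CARD('n)"
  shows "Phi_hat s t M \<le> (\<Sum>j=1..s. ln (eigs M j + t)) + (\<Sum>i=s+1..CARD('n). eigs M i / (eigs M s + t))"
proof -
  let ?n = "CARD('n)"
  obtain u where uo: "orthon u ?n" and ue: "\<forall>i\<in>{1..?n}. M *v u i = eigs M i *\<^sub>R u i"
    and uise: "is_sorted_eigs M (eigs M)"
    using eig_exists[OF psd_sym[OF M]] by blast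
  define lam where "lam = eigs M"
  have lam0: "0 \<le> lam i" for i using psd_eigs_nonneg[OF M] by (simp add: lam_def)
  have lsort: "lam j \<le> lam i" if "1 \<le> i" "i \<le> j" "j \<le> ?n" for i j
    using uise that by (simp add: is_sorted_eigs_def lam_def)
  define wt where "wt i = 1 / (lam (min i s) + t)" for i
  define L where "L Y = (\<Sum>i=1..?n. wt i * (u i \<bullet> (Y *v u i)))" for Y :: "real^'n^'n"
  define c where "c = (\<Sum>j=1..s. ln (lam j + t) - wt j * lam j)"
  define g where "g Y = c + L Y" for Y
  have wpos: "0 < wt i" for i using lam0[of "min i s"] t by (simp add: wt_def)
  have wle: "wt i = 1 / (lam i + t)" if "i \<le> s" for i using that by (simp add: wt_def)
  have conc: "concave_on psd_cone g"
    unfolding concave_on_iff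
  proof (intro conjI convex_psd ballI allI impI)
    fix X Z :: "real^'n^'n" and a b :: real
    assume ab: "0 \<le> a" "0 \<le> b" "a + b = 1"
    have "L (a *\<^sub>R X + b *\<^sub>R Z) = a * L X + b * L Z"
      by (simp add: L_def matrix_vector_mult_add_rdistrib scaleR_matrix_vector_assoc[symmetric]
          inner_add_right sum.distrib sum_distrib_left algebra_simps)
    then have "g (a *\<^sub>R X + b *\<^sub>R Z) = a * g X + b * g Z"
      using ab by (simp add: g_def algebra_simps) (metis distrib_right mult_1)
    then show "a * g X + b * g Z \<le> g (a *\<^sub>R X + b *\<^sub>R Z)" by simp
  qed
  have maj: "Phi s t Y \<le> g Y" if Y: "Y \<in> psd_cone" for Y
  proof -
    obtain v where vo: "orthon v ?n" and ve: "\<forall>i\<in>{1..?n}. Y *v v i = eigs Y i *\<^sub>R v i"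
      and vise: "is_sorted_eigs Y (eigs Y)"
      using eig_exists[OF psd_sym[OF Y]] by blast
    define mu where "mu = eigs Y"
    have mu0: "0 \<le> mu i" for i using psd_eigs_nonneg[OF Y] by (simp add: mu_def)
    have msort: "\<forall>i j. 1 \<le> i \<and> i \<le> j \<and> j \<le> ?n \<longrightarrow> mu j \<le> mu i"
      using vise by (simp add: is_sorted_eigs_def mu_def)
    have step1: "ln (mu j + t) \<le> (ln (lam j + t) - wt j * lam j) + wt j * mu j" if j: "j \<in> {1..s}" for j
    proof -
      have p1: "0 < mu j + t" "0 < lam j + t" using mu0[of j] lam0[of j] t by auto
      have "ln (mu j + t) - ln (lam j + t) = ln ((mu j + t) / (lam j + t))"
        using p1 by (simp add: ln_div)
      also have "\<dots> \<le> (mu j + t) / (lam j + t) - 1"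
        using p1 by (intro ln_le_minus_one) simp
      also have "\<dots> = (mu j - lam j) / (lam j + t)"
        using p1 by (simp add: field_simps)
      also have "\<dots> = wt j * mu j - wt j * lam j"
        using j by (simp add: wle diff_divide_distrib)
      finally show ?thesis by simp
    qed
    have "Phi s t Y = (\<Sum>j=1..s. ln (mu j + t))" by (simp add: Phi_def mu_def)
    also have "\<dots> \<le> (\<Sum>j=1..s. (ln (lam j + t) - wt j * lam j) + wt j * mu j)"
      using step1 by (rule sum_mono)
    also have "\<dots> = c + (\<Sum>j=1..s. wt j * mu j)" by (simp add: c_def sum.distrib)
    also have "(\<Sum>j=1..s. wt j * mu j) \<le> (\<Sum>j=1..?n. wt j * mu j)"
    proof -
      have "(\<Sum>j=1..?n. wt j * mu j) = (\<Sum>j=1..s. wt j * mu j) + (\<Sum>j=s+1..?n. wt j * mu j)"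
        using s(2) by (rule sum_split_at)
      moreover have "0 \<le> (\<Sum>j=s+1..?n. wt j * mu j)"
        using wpos mu0 by (intro sum_nonneg) (simp add: less_imp_le)
      ultimately show ?thesis by simp
    qed
    also have "(\<Sum>j=1..?n. wt j * mu j) \<le> (\<Sum>i=1..?n. wt i * (\<Sum>j=1..?n. mu j * (u i \<bullet> v j)^2))"
    proof (rule rearr)
      show "\<forall>i\<in>{1..?n}. \<forall>j\<in>{1..?n}. 0 \<le> (u i \<bullet> v j)^2" by simp
      show "\<forall>j\<in>{1..?n}. (\<Sum>i=1..?n. (u i \<bullet> v j)^2) = 1"
      proof
        fix j assume j: "j \<in> {1..?n}"
        have "v j \<bullet> v j = (\<Sum>i=1..?n. (v j \<bullet> u i)^2)" by (rule norm_expand[OF uo])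
        then show "(\<Sum>i=1..?n. (u i \<bullet> v j)^2) = 1" using vo j by (simp add: orthon_def inner_commute)
      qed
      show "\<forall>i\<in>{1..?n}. (\<Sum>j=1..?n. (u i \<bullet> v j)^2) = 1"
      proof
        fix i assume i: "i \<in> {1..?n}"
        have "u i \<bullet> u i = (\<Sum>j=1..?n. (u i \<bullet> v j)^2)" by (rule norm_expand[OF vo])
        then show "(\<Sum>j=1..?n. (u i \<bullet> v j)^2) = 1" using uo i by (simp add: orthon_def)
      qed
      show "\<forall>i j. 1 \<le> i \<and> i \<le> j \<and> j \<le> ?n \<longrightarrow> wt i \<le> wt j"
      proof (intro allI impI)
        fix i j assume ij: "1 \<le> i \<and> i \<le> j \<and> j \<le> ?n"
        have "1 \<le> min i s" "min i s \<le> min j s" "min j s \<le> ?n" using ij s by auto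
        then have "lam (min j s) \<le> lam (min i s)" by (rule lsort)
        then show "wt i \<le> wt j" unfolding wt_def using lam0[of "min j s"] t
          by (intro divide_left_mono) (auto intro: add_pos_nonneg mult_pos_pos)
      qed
      show "\<forall>i j. 1 \<le> i \<and> i \<le> j \<and> j \<le> ?n \<longrightarrow> mu j \<le> mu i" by (rule msort)
    qed
    also have "(\<Sum>i=1..?n. wt i * (\<Sum>j=1..?n. mu j * (u i \<bullet> v j)^2)) = L Y"
      unfolding L_def
    proof (rule sum.cong[OF refl])
      fix i
      have "u i \<bullet> (Y *v u i) = (\<Sum>j=1..?n. eigs Y j * (u i \<bullet> v j)^2)" by (rule qf_expand[OF vo ve])
      then show "wt i * (\<Sum>j=1..?n. mu j * (u i \<bullet> v j)^2) = wt i * (u i \<bullet> (Y *v u i))" by (simp add: mu_def)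
    qed
    finally show ?thesis by (simp add: g_def)
  qed
  have "Phi_hat s t M \<le> g M"
    unfolding Phi_hat_def
  proof (rule cInf_lower)
    show "g M \<in> {g' M |g'. concave_on psd_cone g' \<and> (\<forall>Y\<in>psd_cone. Phi s t Y \<le> g' Y)}"
      using conc maj by blast
    show "bdd_below {g' M |g'. concave_on psd_cone g' \<and> (\<forall>Y\<in>psd_cone. Phi s t Y \<le> g' Y)}"
      unfolding bdd_below_def using M by blast
  qed
  also have "g M = (\<Sum>j=1..s. ln (lam j + t)) + (\<Sum>i=s+1..?n. lam i / (lam s + t))"
  proof -
    have uMu: "u i \<bullet> (M *v u i) = lam i" if "i \<in> {1..?n}" for i
      using eig_val[OF uo ue that] by (simp add: lam_def)
    have "L M = (\<Sum>i=1..?n. wt i * lam i)" unfolding L_def by (intro sum.cong refl) (simp add: uMu)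
    also have "\<dots> = (\<Sum>i=1..s. wt i * lam i) + (\<Sum>i=s+1..?n. wt i * lam i)"
      using s(2) by (rule sum_split_at)
    also have "(\<Sum>i=s+1..?n. wt i * lam i) = (\<Sum>i=s+1..?n. lam i / (lam s + t))"
      by (intro sum.cong refl) (simp add: wt_def)
    finally show ?thesis by (simp add: g_def c_def sum_subtractf)
  qed
  finally show ?thesis by (simp add: lam_def)
qed

lemma shift_mult: "(X + t *\<^sub>R mat 1) *v (w::real^'n) = X *v w + t *\<^sub>R w"
  by (simp add: matrix_vector_mult_add_rdistrib scaleR_matrix_vector_assoc[symmetric])

lemma det_shift:
  fixes X :: "real^'n^'n"
  assumes "X \<in> psd_cone"
  shows "det (X + t *\<^sub>R mat 1) = (\<Prod>i=1..CARD('n). eigs X i + t)"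
proof -
  obtain v where o: "orthon v CARD('n)" and e: "\<forall>i\<in>{1..CARD('n)}. X *v v i = eigs X i *\<^sub>R v i"
    using eig_exists[OF psd_sym[OF assms]] by blast
  have "\<forall>i\<in>{1..CARD('n)}. (X + t *\<^sub>R mat 1) *v v i = (eigs X i + t) *\<^sub>R v i"
    using e by (simp add: shift_mult scaleR_add_left)
  then show ?thesis by (rule det_eigbasis[OF o])
qed

lemma Mmat_eig_bound:
  fixes A :: "real^'n^'n" and x :: "real^'n"
  assumes x: "\<forall>i. 0 \<le> x $ i \<and> x $ i \<le> 1"
  shows "eigs (Mmat A x) i \<le> (\<Sum>k\<in>UNIV. (norm (\<chi> j. A $ j $ k))^2)"
proof -
  let ?X = "Mmat A x"
  have X: "?X \<in> psd_cone" using x by (intro Mmat_psd) auto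
  obtain v where o: "orthon v CARD('n)" and e: "\<forall>i\<in>{1..CARD('n)}. ?X *v v i = eigs ?X i *\<^sub>R v i"
    and ise: "is_sorted_eigs ?X (eigs ?X)"
    using eig_exists[OF psd_sym[OF X]] by blast
  have K0: "0 \<le> (\<Sum>k\<in>UNIV. (norm (\<chi> j. A $ j $ k))^2)" by (intro sum_nonneg) simp
  show ?thesis
  proof (cases "i \<in> {1..CARD('n)}")
    case False
    then show ?thesis using ise K0 by (simp add: is_sorted_eigs_def)
  next
    case True
    have nv: "norm (v i) = 1" using o True by (simp add: orthon_def norm_eq_sqrt_inner)
    have "eigs ?X i = v i \<bullet> (?X *v v i)" by (rule eig_val[OF o e True])
    also have "\<dots> = (\<Sum>k\<in>UNIV. x $ k * ((\<chi> j. A $ j $ k) \<bullet> v i)^2)"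
      unfolding Mmat_qf by (simp add: inner_vec_def)
    also have "\<dots> \<le> (\<Sum>k\<in>UNIV. (norm (\<chi> j. A $ j $ k))^2)"
    proof (rule sum_mono)
      fix k
      have "((\<chi> j. A $ j $ k) \<bullet> v i)^2 = \<bar>(\<chi> j. A $ j $ k) \<bullet> v i\<bar>^2" by simp
      also have "\<dots> \<le> (norm (\<chi> j. A $ j $ k) * norm (v i))^2"
        by (intro power_mono Cauchy_Schwarz_ineq2) simp
      finally have c: "((\<chi> j. A $ j $ k) \<bullet> v i)^2 \<le> (norm (\<chi> j. A $ j $ k))^2" using nv by simp
      have "x $ k * ((\<chi> j. A $ j $ k) \<bullet> v i)^2 \<le> 1 * ((\<chi> j. A $ j $ k) \<bullet> v i)^2"
        using x by (intro mult_right_mono) auto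
      then show "x $ k * ((\<chi> j. A $ j $ k) \<bullet> v i)^2 \<le> (norm (\<chi> j. A $ j $ k))^2" using c by simp
    qed
    finally show ?thesis .
  qed
qed

theorem theorem5:
  fixes C A :: "real^('n::{finite,wellorder})^('n::{finite,wellorder})" and s :: nat and xs :: "real^('n::{finite,wellorder})"
  assumes "1 \<le> s" and "s \<le> CARD('n)"
    and "pos_def C"
    and "is_cholesky_factor A (C - lambda_min C *\<^sub>R mat 1)"
    and "feasible s xs"
    and "\<forall>x. feasible s x \<longrightarrow>
           Phi_hat s (lambda_min C) (Mmat A x) \<le> Phi_hat s (lambda_min C) (Mmat A xs)"
  shows "z_hat_D s A (lambda_min C) - z_hat s A (lambda_min C)
           \<ge> (1 / (eigs (Mmat A xs) (s + 1) + lambda_min C) - 1 / (eigs (Mmat A xs) s + lambda_min C))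
              * (\<Sum>i=s+1..CARD('n). eigs (Mmat A xs) i)
       \<and> (1 / (eigs (Mmat A xs) (s + 1) + lambda_min C) - 1 / (eigs (Mmat A xs) s + lambda_min C))
              * (\<Sum>i=s+1..CARD('n). eigs (Mmat A xs) i) \<ge> 0"
proof -
  let ?n = "CARD('n)"
  define t where "t = lambda_min C"
  define M where "M = Mmat A xs"
  define lam where "lam = eigs M"
  note s = assms(1,2)
  have tpos: "t > 0"
  proof -
    have symC: "transpose C = C" using assms(3) by (simp add: pos_def_def)
    obtain v where o: "orthon v ?n" and e: "\<forall>i\<in>{1..?n}. C *v v i = eigs C i *\<^sub>R v i"
      using eig_exists[OF symC] by blast
    have nin: "?n \<in> {1..?n}" by simp
    have "v ?n \<noteq> 0" by (rule orthon_nz[OF o nin])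
    then have "0 < v ?n \<bullet> (C *v v ?n)" using assms(3) by (simp add: pos_def_def)
    then show ?thesis using eig_val[OF o e nin] by (simp add: t_def lambda_min_def)
  qed
  have feasx: "\<forall>i. 0 \<le> x $ i \<and> x $ i \<le> 1" if "feasible s x" for x using that by (simp add: feasible_def)
  have Mpsd: "M \<in> psd_cone" unfolding M_def using feasx[OF assms(5)] by (intro Mmat_psd) auto
  have lam0: "0 \<le> lam i" for i unfolding lam_def by (rule psd_eigs_nonneg[OF Mpsd])
  have lsort: "lam j \<le> lam i" if "1 \<le> i" "i \<le> j" "j \<le> ?n" for i j
  proof -
    obtain v where "is_sorted_eigs M (eigs M)" using eig_exists[OF psd_sym[OF Mpsd]] by blast
    then show ?thesis using that by (simp add: is_sorted_eigs_def lam_def)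
  qed
  have zh: "z_hat s A t = Phi_hat s t M"
    unfolding z_hat_def M_def
    by (rule cSup_eq_maximum) (use assms(5,6) in \<open>auto simp: t_def\<close>)
  have zhle: "z_hat s A t \<le> (\<Sum>j=1..s. ln (lam j + t)) + (\<Sum>i=s+1..?n. lam i / (lam s + t))"
    unfolding zh lam_def by (rule phi_hat_bound[OF Mpsd tpos s])
  define K where "K = (\<Sum>k\<in>UNIV. (norm (\<chi> j. A $ j $ k))^2)"
  have K0: "0 \<le> K" unfolding K_def by (intro sum_nonneg) simp
  have bdd: "bdd_above {ln (det (Mmat A x + t *\<^sub>R mat 1)) | x. feasible s x}"
  proof (rule bdd_aboveI)
    fix y assume "y \<in> {ln (det (Mmat A x + t *\<^sub>R mat 1)) | x. feasible s x}"
    then obtain x where fx: "feasible s x" and y: "y = ln (det (Mmat A x + t *\<^sub>R mat 1))" by auto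
    have Xp: "Mmat A x \<in> psd_cone" using feasx[OF fx] by (intro Mmat_psd) auto
    have d: "det (Mmat A x + t *\<^sub>R mat 1) = (\<Prod>i=1..?n. eigs (Mmat A x) i + t)" by (rule det_shift[OF Xp])
    have pos: "0 < eigs (Mmat A x) i + t" for i using psd_eigs_nonneg[OF Xp, of i] tpos by simp
    have dpos: "0 < det (Mmat A x + t *\<^sub>R mat 1)" unfolding d using pos by (intro prod_pos) auto
    have "det (Mmat A x + t *\<^sub>R mat 1) \<le> (\<Prod>i=1..?n. K + t)"
      unfolding d
    proof (rule prod_mono)
      fix i
      show "0 \<le> eigs (Mmat A x) i + t \<and> eigs (Mmat A x) i + t \<le> K + t"
        using pos[of i] Mmat_eig_bound[OF feasx[OF fx], of A i] by (simp add: K_def less_imp_le)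
    qed
    then have "det (Mmat A x + t *\<^sub>R mat 1) \<le> (K + t) ^ ?n" by simp
    moreover have "ln (det (Mmat A x + t *\<^sub>R mat 1)) \<le> det (Mmat A x + t *\<^sub>R mat 1) - 1"
      using dpos by (rule ln_le_minus_one)
    ultimately show "y \<le> (K + t) ^ ?n" using y by simp
  qed
  have lndet: "ln (det (M + t *\<^sub>R mat 1)) = (\<Sum>i=1..?n. ln (lam i + t))"
  proof -
    have "det (M + t *\<^sub>R mat 1) = (\<Prod>i=1..?n. lam i + t)" unfolding lam_def by (rule det_shift[OF Mpsd])
    moreover have "lam i + t \<noteq> 0" for i using lam0[of i] tpos by simp
    ultimately show ?thesis by (simp add: ln_prod)
  qed
  have zDge: "(\<Sum>i=1..?n. ln (lam i + t)) - real (?n - s) * ln t \<le> z_hat_D s A t"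
  proof -
    have "ln (det (M + t *\<^sub>R mat 1)) \<le> Sup {ln (det (Mmat A x + t *\<^sub>R mat 1)) | x. feasible s x}"
      by (rule cSup_upper[OF _ bdd]) (use assms(5) in \<open>auto simp: M_def\<close>)
    then show ?thesis unfolding z_hat_D_def lndet by simp
  qed
  define Th where "Th = (1 / (lam (s + 1) + t) - 1 / (lam s + t)) * (\<Sum>i=s+1..?n. lam i)"
  have lnt: "real (?n - s) * ln t = (\<Sum>i=s+1..?n. ln t)" by simp
  have split: "(\<Sum>i=1..?n. ln (lam i + t)) = (\<Sum>i=1..s. ln (lam i + t)) + (\<Sum>i=s+1..?n. ln (lam i + t))"
    using s(2) by (rule sum_split_at)
  have termi: "lam i / (lam (s + 1) + t) - lam i / (lam s + t) \<le> ln (lam i + t) - ln t - lam i / (lam s + t)"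
    if i: "i \<in> {s+1..?n}" for i
  proof -
    have li: "lam i \<le> lam (s + 1)" using lsort[of "s+1" i] i by auto
    have p: "0 < lam i + t" using lam0[of i] tpos by simp
    have "lam i / (lam (s + 1) + t) \<le> lam i / (lam i + t)"
      using li lam0[of i] p by (intro divide_left_mono) auto
    moreover have "ln (t / (lam i + t)) \<le> t / (lam i + t) - 1"
      using p tpos by (intro ln_le_minus_one) simp
    moreover have "ln (t / (lam i + t)) = ln t - ln (lam i + t)" using p tpos by (simp add: ln_div)
    moreover have "t / (lam i + t) - 1 = - (lam i / (lam i + t))" using p by (simp add: field_simps)
    ultimately show ?thesis by linarith
  qed
  have Th_eq: "Th = (\<Sum>i=s+1..?n. lam i / (lam (s + 1) + t) - lam i / (lam s + t))"
  proof -
    have "(\<Sum>i=s+1..?n. lam i / (lam (s + 1) + t) - lam i / (lam s + t))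
        = (\<Sum>i=s+1..?n. lam i) / (lam (s + 1) + t) - (\<Sum>i=s+1..?n. lam i) / (lam s + t)"
      by (simp add: sum_subtractf sum_divide_distrib)
    then show ?thesis by (simp add: Th_def left_diff_distrib)
  qed
  have main: "Th \<le> z_hat_D s A t - z_hat s A t"
  proof -
    have "Th \<le> (\<Sum>i=s+1..?n. ln (lam i + t) - ln t - lam i / (lam s + t))"
      unfolding Th_eq by (rule sum_mono) (rule termi)
    also have "\<dots> = (\<Sum>i=1..?n. ln (lam i + t)) - real (?n - s) * ln t
        - ((\<Sum>j=1..s. ln (lam j + t)) + (\<Sum>i=s+1..?n. lam i / (lam s + t)))"
      unfolding lnt split by (simp add: sum_subtractf)
    also have "\<dots> \<le> z_hat_D s A t - z_hat s A t" using zDge zhle by linarith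
    finally show ?thesis .
  qed
  have nonneg: "0 \<le> Th"
  proof -
    have l1: "lam (s + 1) \<le> lam s"
    proof (cases "s + 1 \<le> ?n")
      case True then show ?thesis using lsort[of s "s+1"] s by simp
    next
      case False
      then have "lam (s + 1) = 0"
      proof -
        obtain v where "is_sorted_eigs M (eigs M)" using eig_exists[OF psd_sym[OF Mpsd]] by blast
        then show ?thesis using False by (simp add: is_sorted_eigs_def lam_def)
      qed
      then show ?thesis using lam0[of s] by simp
    qed
    have "1 / (lam s + t) \<le> 1 / (lam (s + 1) + t)"
      using l1 lam0[of "s+1"] tpos by (intro divide_left_mono) auto
    moreover have "0 \<le> (\<Sum>i=s+1..?n. lam i)" using lam0 by (intro sum_nonneg) auto
    ultimately show ?thesis unfolding Th_def by simp
  qed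
  show ?thesis using main nonneg by (simp add: Th_def t_def M_def lam_def)
qed

end
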